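(* Let $R$ be a commutative Noetherian ring of prime characteristic $p$ and $G$ an $x$-torsion-free left $R[x,f]$-module. Let $N:=\operatorname{ann}_G(\mathfrak{b}R[x,f])$ be a non-zero special annihilator submodule of $G$, where $\mathfrak{b}\in\mathcal{I}(G)$ satisfies $\operatorname{grann}_{R[x,f]}N=\mathfrak{b}R[x,f]$, and let $\mathfrak{b}=\mathfrak{p}_1\cap\dots\cap\mathfrak{p}_t$ be the minimal primary decomposition of the radical ideal $\mathfrak{b}$. Suppose $t>1$ and $\{1,\dots,t\}=U\cup V$ with $U,V$ non-empty and disjoint; set $\mathfrak{a}=\bigcap_{i\in U}\mathfrak{p}_i$, $\mathfrak{c}=\bigcap_{i\in V}\mathfrak{p}_i$ and $L:=\operatorname{ann}_G(\mathfrak{a}R[x,f])$. Then (i) $0\subsetneq L\subsetneq N$; (ii) $N/L=\operatorname{ann}_{G/L}(\mathfrak{c}R[x,f])$, and $\operatorname{grann}_{R[x,f]}(N/L)=\mathfrak{c}R[x,f]$ (so $\mathfrak{c}\in\mathcal{I}(G/L)$ corresponds to $N/L$); (iii) $\operatorname{grann}_{R[x,f]}L=\mathfrak{a}R[x,f]$, so $\mathfrak{a}\in\mathcal{I}(G)$ corresponds to $L$.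
   Context: $R[x,f]$ is the Frobenius skew polynomial ring: free left $R$-module on $(x^i)_{i\ge0}$, $xr=r^px$. For an ideal $\mathfrak{a}$ of $R$, $\mathfrak{a}R[x,f]=\bigoplus_{n\ge0}\mathfrak{a}x^n$. $x$-torsion-free: $xg=0\Rightarrow g=0$. $\operatorname{ann}_M\mathfrak{B}$ is the set of elements of $M$ killed by $\mathfrak{B}$; special annihilator submodules are $\operatorname{ann}_M\mathfrak{B}$ for graded two-sided ideals $\mathfrak{B}$. $\operatorname{grann}N$ is the set of $\sum r_ix^i$ with each $r_ix^i$ annihilating $N$. For $x$-torsion-free $G$, $\mathcal{I}(G)$ is the set of ideals $\mathfrak{b}$ with $\operatorname{grann}N=\mathfrak{b}R[x,f]$ for some $R[x,f]$-submodule $N$ of $G$ (these ideals are radical). For a special annihilator submodule $L$ of $G$, $G/L$ is $x$-torsion-free. *)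

theory Defs
  imports "HOL-Algebra.Algebra"
begin

text \<open>A left module over the Frobenius skew polynomial ring R[x,f] is an R-module M
together with an additive map F (the action of x) with F (r m) = r^p F m.\<close>

definition frob_skew_module ::
  "('a, 'c) ring_scheme \<Rightarrow> ('a, 'b, 'd) module_scheme \<Rightarrow> nat \<Rightarrow> ('b \<Rightarrow> 'b) \<Rightarrow> bool" where
  "frob_skew_module R M p F \<longleftrightarrow>
     module R M \<and>
     (\<forall>g \<in> carrier M. F g \<in> carrier M) \<and>
     (\<forall>g \<in> carrier M. \<forall>h \<in> carrier M. F (g \<oplus>\<^bsub>M\<^esub> h) = F g \<oplus>\<^bsub>M\<^esub> F h) \<and>
     (\<forall>r \<in> carrier R. \<forall>g \<in> carrier M. F (r \<odot>\<^bsub>M\<^esub> g) = (r [^]\<^bsub>R\<^esub> p) \<odot>\<^bsub>M\<^esub> F g)"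

definition char_prime :: "('a, 'c) ring_scheme \<Rightarrow> nat \<Rightarrow> bool" where
  "char_prime R p \<longleftrightarrow> Factorial_Ring.prime p \<and> [p] \<cdot>\<^bsub>R\<^esub> \<one>\<^bsub>R\<^esub> = \<zero>\<^bsub>R\<^esub>"

definition x_torsion_free :: "('a, 'b, 'd) module_scheme \<Rightarrow> ('b \<Rightarrow> 'b) \<Rightarrow> bool" where
  "x_torsion_free M F \<longleftrightarrow> (\<forall>g \<in> carrier M. F g = \<zero>\<^bsub>M\<^esub> \<longrightarrow> g = \<zero>\<^bsub>M\<^esub>)"

text \<open>ann_M(b R[x,f]), relative to a submodule L (i.e. computed in M/L, pulled back to M).
  With L = {0} this is ann_M(b R[x,f]).\<close>
definition ann_rel ::
  "('a, 'b, 'd) module_scheme \<Rightarrow> ('b \<Rightarrow> 'b) \<Rightarrow> 'b set \<Rightarrow> 'a set \<Rightarrow> 'b set" where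
  "ann_rel M F L b = {g \<in> carrier M. \<forall>r \<in> b. \<forall>n::nat. r \<odot>\<^bsub>M\<^esub> (F ^^ n) g \<in> L}"

abbreviation ann_ext ::
  "('a, 'b, 'd) module_scheme \<Rightarrow> ('b \<Rightarrow> 'b) \<Rightarrow> 'a set \<Rightarrow> 'b set" where
  "ann_ext M F b \<equiv> ann_rel M F {\<zero>\<^bsub>M\<^esub>} b"

text \<open>Graded annihilator: grann N = \<Oplus>_n c_n x^n is represented by the sequence of its
  homogeneous components c_n = {r. r x^n N = 0}.  The ideal b R[x,f] = \<Oplus>_n b x^n is
  represented by the constant sequence (\<lambda>n. b).  The relative version computes grann of N/L
  inside M/L.\<close>
definition grann_rel ::
  "('a, 'c) ring_scheme \<Rightarrow> ('a, 'b, 'd) module_scheme \<Rightarrow> ('b \<Rightarrow> 'b) \<Rightarrow> 'b set \<Rightarrow> 'b set \<Rightarrow> nat \<Rightarrow> 'a set" where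
  "grann_rel R M F L N n = {r \<in> carrier R. \<forall>g \<in> N. r \<odot>\<^bsub>M\<^esub> (F ^^ n) g \<in> L}"

abbreviation grann ::
  "('a, 'c) ring_scheme \<Rightarrow> ('a, 'b, 'd) module_scheme \<Rightarrow> ('b \<Rightarrow> 'b) \<Rightarrow> 'b set \<Rightarrow> nat \<Rightarrow> 'a set" where
  "grann R M F N \<equiv> grann_rel R M F {\<zero>\<^bsub>M\<^esub>} N"

definition ext_ideal :: "'a set \<Rightarrow> nat \<Rightarrow> 'a set" where
  "ext_ideal b = (\<lambda>n. b)"

definition minimal_prime_decomp ::
  "('a, 'c) ring_scheme \<Rightarrow> 'a set \<Rightarrow> (nat \<Rightarrow> 'a set) \<Rightarrow> nat \<Rightarrow> bool" where
  "minimal_prime_decomp R b P t \<longleftrightarrow>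
     (\<forall>i \<in> {1..t}. primeideal (P i) R) \<and>
     b = (\<Inter>i \<in> {1..t}. P i) \<and>
     (\<forall>i \<in> {1..t}. \<forall>j \<in> {1..t}. i \<noteq> j \<longrightarrow> P i \<noteq> P j) \<and>
     (\<forall>i \<in> {1..t}. (\<Inter>j \<in> {1..t} - {i}. P j) \<noteq> b)"

end

theory Submission
  imports Defs
begin

lemma fsm_module: "frob_skew_module R M p F \<Longrightarrow> module R M"
  by (simp add: frob_skew_module_def)

lemma fsm_pow_closed:
  assumes "frob_skew_module R M p F" "g \<in> carrier M"
  shows "(F ^^ n) g \<in> carrier M"
  using assms by (induct n) (auto simp: frob_skew_module_def)

lemma fsm_pow_smult:
  assumes "frob_skew_module R M p F" "r \<in> carrier R" "g \<in> carrier M"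
  shows "(F ^^ n) (r \<odot>\<^bsub>M\<^esub> g) = (r [^]\<^bsub>R\<^esub> (p ^ n)) \<odot>\<^bsub>M\<^esub> (F ^^ n) g"
proof (induct n)
  case 0
  interpret module R M using assms(1) by (rule fsm_module)
  show ?case using assms by simp
next
  case (Suc n)
  interpret module R M using assms(1) by (rule fsm_module)
  have "(F ^^ Suc n) (r \<odot>\<^bsub>M\<^esub> g) = F ((r [^]\<^bsub>R\<^esub> (p ^ n)) \<odot>\<^bsub>M\<^esub> (F ^^ n) g)"
    using Suc by simp
  also have "\<dots> = ((r [^]\<^bsub>R\<^esub> (p ^ n)) [^]\<^bsub>R\<^esub> p) \<odot>\<^bsub>M\<^esub> F ((F ^^ n) g)"
    using assms fsm_pow_closed[OF assms(1,3)] unfolding frob_skew_module_def by simp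
  also have "\<dots> = (r [^]\<^bsub>R\<^esub> (p ^ Suc n)) \<odot>\<^bsub>M\<^esub> (F ^^ Suc n) g"
    using assms(2) by (simp add: R.nat_pow_pow mult.commute)
  finally show ?case .
qed

lemma fsm_zero:
  assumes "frob_skew_module R M p F"
  shows "F \<zero>\<^bsub>M\<^esub> = \<zero>\<^bsub>M\<^esub>"
proof -
  interpret module R M using assms by (rule fsm_module)
  have c: "F \<zero>\<^bsub>M\<^esub> \<in> carrier M" using assms by (simp add: frob_skew_module_def)
  have "F \<zero>\<^bsub>M\<^esub> = F \<zero>\<^bsub>M\<^esub> \<oplus>\<^bsub>M\<^esub> F \<zero>\<^bsub>M\<^esub>"
    using assms unfolding frob_skew_module_def by (metis M.zero_closed M.l_zero)
  then show ?thesis using c by (metis M.l_zero M.add.right_cancel M.zero_closed)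
qed

lemma fsm_pow_zero:
  assumes "frob_skew_module R M p F"
  shows "(F ^^ n) \<zero>\<^bsub>M\<^esub> = \<zero>\<^bsub>M\<^esub>"
  by (induct n) (simp_all add: fsm_zero[OF assms])

lemma prime_pow_mem:
  assumes "primeideal P R" "r \<in> carrier R" "r [^]\<^bsub>R\<^esub> (Suc k) \<in> P"
  shows "r \<in> P"
  using assms(3)
proof (induct k)
  case 0
  interpret primeideal P R by fact
  show ?case using 0 assms(2) by simp
next
  case (Suc k)
  interpret primeideal P R by fact
  show ?case using Suc assms(2) I_prime[of "r [^]\<^bsub>R\<^esub> Suc k" r] by auto
qed

lemma prime_avoid:
  assumes "finite W" "W \<noteq> {}" "primeideal Q R" "\<forall>j\<in>W. ideal (P j) R"
    "(\<Inter>j\<in>W. P j) \<subseteq> Q"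
  shows "\<exists>j\<in>W. P j \<subseteq> Q"
  using assms(1,2,4,5)
proof (induct W rule: finite_ne_induct)
  case (singleton x)
  then show ?case by simp
next
  case (insert w W)
  interpret primeideal Q R by fact
  show ?case
  proof (cases "P w \<subseteq> Q")
    case True then show ?thesis by simp
  next
    case False
    then obtain x where x: "x \<in> P w" "x \<notin> Q" by blast
    have xc: "x \<in> carrier R" using x insert(5) ideal.Icarr by fastforce
    have "(\<Inter>j\<in>W. P j) \<subseteq> Q"
    proof
      fix y assume y: "y \<in> (\<Inter>j\<in>W. P j)"
      obtain j0 where "j0 \<in> W" using insert(2) by blast
      then have yc: "y \<in> carrier R" using y insert(5) ideal.Icarr by fastforce
      have "x \<otimes>\<^bsub>R\<^esub> y \<in> (\<Inter>j\<in>insert w W. P j)"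
        using x y insert(5) xc yc by (auto intro: ideal.I_r_closed ideal.I_l_closed)
      then have "x \<otimes>\<^bsub>R\<^esub> y \<in> Q" using insert(6) by blast
      then show "y \<in> Q" using I_prime[OF xc yc] x by blast
    qed
    then show ?thesis using insert by auto
  qed
qed

lemma ideal_pow_mem:
  assumes "ideal I R" "r \<in> I"
  shows "r [^]\<^bsub>R\<^esub> (Suc k) \<in> I"
proof (induct k)
  case 0
  interpret ideal I R by fact
  show ?case using assms(2) Icarr by simp
next
  case (Suc k)
  interpret ideal I R by fact
  have "r [^]\<^bsub>R\<^esub> (Suc (Suc k)) = r [^]\<^bsub>R\<^esub> (Suc k) \<otimes>\<^bsub>R\<^esub> r" by simp
  then show ?case using Suc assms(2) Icarr I_r_closed by metis
qed

theorem theorem3p6: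
  fixes R :: "('a, 'c) ring_scheme" and M :: "('a, 'b, 'd) module_scheme"
    and p :: nat and F :: "'b \<Rightarrow> 'b" and b :: "'a set" and P :: "nat \<Rightarrow> 'a set"
    and t :: nat and U V :: "nat set"
  assumes "cring R" and "noetherian_ring R" and "char_prime R p"
    and "frob_skew_module R M p F" and "x_torsion_free M F"
    and "ann_ext M F b \<noteq> {\<zero>\<^bsub>M\<^esub>}"
    and "grann R M F (ann_ext M F b) = ext_ideal b"
    and "minimal_prime_decomp R b P t"
    and "t > 1"
    and "U \<union> V = {1..t}" and "U \<inter> V = {}" and "U \<noteq> {}" and "V \<noteq> {}"
  shows "({\<zero>\<^bsub>M\<^esub>} \<subset> ann_ext M F (\<Inter>i \<in> U. P i)
           \<and> ann_ext M F (\<Inter>i \<in> U. P i) \<subset> ann_ext M F b)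
    \<and> ann_rel M F (ann_ext M F (\<Inter>i \<in> U. P i)) (\<Inter>i \<in> V. P i) = ann_ext M F b
    \<and> grann_rel R M F (ann_ext M F (\<Inter>i \<in> U. P i)) (ann_ext M F b)
           = ext_ideal (\<Inter>i \<in> V. P i)
    \<and> grann R M F (ann_ext M F (\<Inter>i \<in> U. P i)) = ext_ideal (\<Inter>i \<in> U. P i)"
proof -
  define A where "A = (\<Inter>i \<in> U. P i)"
  define C where "C = (\<Inter>i \<in> V. P i)"
  define N where "N = ann_ext M F b"
  define L where "L = ann_ext M F A"
  have fsm: "frob_skew_module R M p F" by fact
  interpret module R M using fsm by (rule fsm_module)
  have Fc: "\<And>g. g \<in> carrier M \<Longrightarrow> F g \<in> carrier M"
    and Fsm: "\<And>r g. r \<in> carrier R \<Longrightarrow> g \<in> carrier M \<Longrightarrow> F (r \<odot>\<^bsub>M\<^esub> g) = (r [^]\<^bsub>R\<^esub> p) \<odot>\<^bsub>M\<^esub> F g"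
    using fsm unfolding frob_skew_module_def by auto
  have tf: "\<And>g. g \<in> carrier M \<Longrightarrow> F g = \<zero>\<^bsub>M\<^esub> \<Longrightarrow> g = \<zero>\<^bsub>M\<^esub>"
    using assms(5) unfolding x_torsion_free_def by auto
  have p2: "p \<ge> 2" using assms(3) unfolding char_prime_def using prime_ge_2_nat by blast
  have Pp: "\<And>i. i \<in> {1..t} \<Longrightarrow> primeideal (P i) R"
    and bdef: "b = (\<Inter>i \<in> {1..t}. P i)"
    and minim: "\<And>i. i \<in> {1..t} \<Longrightarrow> (\<Inter>j \<in> {1..t} - {i}. P j) \<noteq> b"
    using assms(8) unfolding minimal_prime_decomp_def by auto
  have Pid: "\<And>i. i \<in> {1..t} \<Longrightarrow> ideal (P i) R" using Pp primeideal.axioms(1) by blast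
  have Pc: "\<And>i. i \<in> {1..t} \<Longrightarrow> P i \<subseteq> carrier R" by (meson Pid ideal.Icarr subsetI)
  have Usub: "U \<subseteq> {1..t}" and Vsub: "V \<subseteq> {1..t}" using assms(10) by auto
  have bAC: "b = A \<inter> C" unfolding bdef A_def C_def using assms(10) by auto
  have Ac: "A \<subseteq> carrier R" unfolding A_def using Pc Usub assms(12) by blast
  have Cc: "C \<subseteq> carrier R" unfolding C_def using Pc Vsub assms(13) by blast
  have bc: "b \<subseteq> carrier R" using bAC Ac by blast
  have avoid: "\<not> (\<Inter>j\<in>W. P j) \<subseteq> P i" if W: "W \<subseteq> {1..t}" "W \<noteq> {}" "i \<in> {1..t} - W" for W i
  proof
    assume h: "(\<Inter>j\<in>W. P j) \<subseteq> P i"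
    have "finite W" using W(1) finite_subset by blast
    then obtain j where j: "j \<in> W" "P j \<subseteq> P i"
      using prime_avoid[of W "P i" R P] W h Pp Pid by blast
    have "(\<Inter>k \<in> {1..t} - {i}. P k) \<subseteq> P j" using j W by blast
    then have "(\<Inter>k \<in> {1..t} - {i}. P k) \<subseteq> b" unfolding bdef using j by blast
    moreover have "b \<subseteq> (\<Inter>k \<in> {1..t} - {i}. P k)" unfolding bdef by blast
    ultimately show False using minim W(3) by blast
  qed
  have grN: "\<And>n. grann R M F N n = b"
    using assms(7) unfolding N_def ext_ideal_def by metis
  have Nc: "N \<subseteq> carrier M" unfolding N_def ann_rel_def by blast
  have powc: "\<And>g n. g \<in> carrier M \<Longrightarrow> (F ^^ n) g \<in> carrier M"
    using fsm_pow_closed[OF fsm] by blast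
  have pos: "\<And>m. p ^ m = Suc (p ^ m - 1)" using p2 by simp
  have key1: "r \<odot>\<^bsub>M\<^esub> (F ^^ n) g \<in> L" if g: "g \<in> N" and r: "r \<in> C" for g r n
  proof -
    have gc: "g \<in> carrier M" using g Nc by blast
    have rc: "r \<in> carrier R" using r Cc by blast
    have "s \<odot>\<^bsub>M\<^esub> (F ^^ m) (r \<odot>\<^bsub>M\<^esub> (F ^^ n) g) = \<zero>\<^bsub>M\<^esub>" if s: "s \<in> A" for s m
    proof -
      have sc: "s \<in> carrier R" using s Ac by blast
      have rpc: "r [^]\<^bsub>R\<^esub> (p ^ m) \<in> carrier R" using rc by simp
      have "s \<otimes>\<^bsub>R\<^esub> r [^]\<^bsub>R\<^esub> (p ^ m) \<in> P i" if i: "i \<in> U" for i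
      proof -
        have iU: "i \<in> {1..t}" using i Usub by blast
        have "s \<in> P i" using s i unfolding A_def by blast
        then show ?thesis using ideal.I_r_closed[OF Pid[OF iU]] rpc by blast
      qed
      then have "s \<otimes>\<^bsub>R\<^esub> r [^]\<^bsub>R\<^esub> (p ^ m) \<in> A" unfolding A_def by blast
      moreover have "s \<otimes>\<^bsub>R\<^esub> r [^]\<^bsub>R\<^esub> (p ^ m) \<in> P i" if i: "i \<in> V" for i
      proof -
        have iV: "i \<in> {1..t}" using i Vsub by blast
        have "r \<in> P i" using r i unfolding C_def by blast
        then have "r [^]\<^bsub>R\<^esub> (Suc (p ^ m - 1)) \<in> P i" using ideal_pow_mem[OF Pid[OF iV]] by blast
        then have "r [^]\<^bsub>R\<^esub> (p ^ m) \<in> P i" using pos[of m] by metis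
        then show ?thesis using ideal.I_l_closed[OF Pid[OF iV]] sc by blast
      qed
      then have "s \<otimes>\<^bsub>R\<^esub> r [^]\<^bsub>R\<^esub> (p ^ m) \<in> C" unfolding C_def by blast
      ultimately have sb: "s \<otimes>\<^bsub>R\<^esub> r [^]\<^bsub>R\<^esub> (p ^ m) \<in> b" using bAC by blast
      have "s \<odot>\<^bsub>M\<^esub> (F ^^ m) (r \<odot>\<^bsub>M\<^esub> (F ^^ n) g)
          = s \<odot>\<^bsub>M\<^esub> (r [^]\<^bsub>R\<^esub> (p ^ m) \<odot>\<^bsub>M\<^esub> (F ^^ m) ((F ^^ n) g))"
        using fsm_pow_smult[OF fsm rc powc[OF gc]] by simp
      also have "\<dots> = (s \<otimes>\<^bsub>R\<^esub> r [^]\<^bsub>R\<^esub> (p ^ m)) \<odot>\<^bsub>M\<^esub> (F ^^ (m + n)) g"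
        using sc rc gc powc by (simp add: smult_assoc1 funpow_add)
      also have "\<dots> = \<zero>\<^bsub>M\<^esub>" using g sb unfolding N_def ann_rel_def by blast
      finally show ?thesis .
    qed
    then show ?thesis unfolding L_def ann_rel_def using rc gc powc by auto
  qed
  have grL: "grann R M F L n = A" for n
  proof
    show "A \<subseteq> grann R M F L n"
      unfolding grann_rel_def L_def ann_rel_def using Ac by auto
  next
    show "grann R M F L n \<subseteq> A"
    proof
      fix r' assume r': "r' \<in> grann R M F L n"
      have r'c: "r' \<in> carrier R" using r' unfolding grann_rel_def by blast
      have "r' \<in> P i" if i: "i \<in> U" for i
      proof -
        have "i \<in> {1..t} - V" using i Usub assms(11) by blast
        then obtain r where r: "r \<in> C" "r \<notin> P i"
          using avoid[OF Vsub assms(13)] unfolding C_def by blast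
        have rc: "r \<in> carrier R" using r Cc by blast
        have "r' \<otimes>\<^bsub>R\<^esub> r [^]\<^bsub>R\<^esub> (p ^ n) \<in> grann R M F N n"
          unfolding grann_rel_def
        proof (intro CollectI conjI ballI)
          show "r' \<otimes>\<^bsub>R\<^esub> r [^]\<^bsub>R\<^esub> (p ^ n) \<in> carrier R" using r'c rc by simp
        next
          fix g assume g: "g \<in> N"
          have gc: "g \<in> carrier M" using g Nc by blast
          have "r \<odot>\<^bsub>M\<^esub> (F ^^ 0) g \<in> L" by (rule key1[OF g r(1)])
          then have "r' \<odot>\<^bsub>M\<^esub> (F ^^ n) (r \<odot>\<^bsub>M\<^esub> g) \<in> {\<zero>\<^bsub>M\<^esub>}"
            using r' unfolding grann_rel_def by simp
          then show "(r' \<otimes>\<^bsub>R\<^esub> r [^]\<^bsub>R\<^esub> (p ^ n)) \<odot>\<^bsub>M\<^esub> (F ^^ n) g \<in> {\<zero>\<^bsub>M\<^esub>}"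
            using fsm_pow_smult[OF fsm rc gc] r'c rc gc powc by (simp add: smult_assoc1)
        qed
        then have "r' \<otimes>\<^bsub>R\<^esub> r [^]\<^bsub>R\<^esub> (p ^ n) \<in> P i" using grN bdef i Usub by blast
        then have "r' \<in> P i \<or> r [^]\<^bsub>R\<^esub> (p ^ n) \<in> P i"
          using primeideal.I_prime[OF Pp, of i r' "r [^]\<^bsub>R\<^esub> (p ^ n)"] i Usub r'c rc by auto
        moreover have "r [^]\<^bsub>R\<^esub> (p ^ n) \<notin> P i"
        proof
          assume h: "r [^]\<^bsub>R\<^esub> (p ^ n) \<in> P i"
          have "r [^]\<^bsub>R\<^esub> (Suc (p ^ n - 1)) \<in> P i" using h pos[of n] by metis
          then have "r \<in> P i" using prime_pow_mem[of "P i" R r "p ^ n - 1"] Pp i Usub rc by blast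
          then show False using r(2) by blast
        qed
        ultimately show ?thesis by blast
      qed
      then show "r' \<in> A" unfolding A_def by blast
    qed
  qed
  have LN: "L \<subseteq> N" unfolding L_def N_def ann_rel_def using bAC by blast
  have zL: "\<zero>\<^bsub>M\<^esub> \<in> L" unfolding L_def ann_rel_def using Ac
    by (auto simp: fsm_pow_zero[OF fsm])
  have Lnz: "L \<noteq> {\<zero>\<^bsub>M\<^esub>}"
  proof
    assume h: "L = {\<zero>\<^bsub>M\<^esub>}"
    have "grann R M F L 0 = carrier R" unfolding h grann_rel_def by auto
    then have "A = carrier R" using grL by simp
    obtain i where i: "i \<in> U" using assms(12) by blast
    have "\<one>\<^bsub>R\<^esub> \<in> P i" using \<open>A = carrier R\<close> i unfolding A_def by auto
    have iU: "i \<in> {1..t}" using i Usub by blast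
    show False using \<open>\<one>\<^bsub>R\<^esub> \<in> P i\<close> primeideal.I_notcarr[OF Pp[OF iU]]
        ideal.one_imp_carrier[OF Pid[OF iU]] by metis
  qed
  have LneN: "L \<noteq> N"
  proof
    assume "L = N"
    then have "A = b" using grL[of 0] grN[of 0] by simp
    obtain i where i: "i \<in> V" using assms(13) by blast
    have "A \<subseteq> P i" using \<open>A = b\<close> bdef i Vsub by blast
    moreover have "i \<in> {1..t} - U" using i Vsub assms(11) by blast
    ultimately show False using avoid[OF Usub assms(12)] unfolding A_def by blast
  qed
  have annrel: "ann_rel M F L C = N"
  proof
    show "N \<subseteq> ann_rel M F L C" unfolding ann_rel_def using key1 Nc by blast
  next
    show "ann_rel M F L C \<subseteq> N"
    proof
      fix g assume g: "g \<in> ann_rel M F L C"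
      have gc: "g \<in> carrier M" using g unfolding ann_rel_def by blast
      have "s \<odot>\<^bsub>M\<^esub> (F ^^ n) g = \<zero>\<^bsub>M\<^esub>" if s: "s \<in> b" for s n
      proof -
        have sA: "s \<in> A" and sC: "s \<in> C" using s bAC by auto
        have sc: "s \<in> carrier R" using sA Ac by blast
        have "s \<odot>\<^bsub>M\<^esub> (F ^^ Suc n) g \<in> L" using g sC unfolding ann_rel_def by blast
        then have "s \<odot>\<^bsub>M\<^esub> (F ^^ 0) (s \<odot>\<^bsub>M\<^esub> (F ^^ Suc n) g) \<in> {\<zero>\<^bsub>M\<^esub>}"
          using sA unfolding L_def ann_rel_def by blast
        then have ss: "(s \<otimes>\<^bsub>R\<^esub> s) \<odot>\<^bsub>M\<^esub> (F ^^ Suc n) g = \<zero>\<^bsub>M\<^esub>"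
          using sc gc powc Fc by (simp add: smult_assoc1)
        have pe: "s [^]\<^bsub>R\<^esub> p = s [^]\<^bsub>R\<^esub> (p - 2) \<otimes>\<^bsub>R\<^esub> (s \<otimes>\<^bsub>R\<^esub> s)"
        proof -
          have pp: "p - 2 + 2 = p" using p2 by simp
          have "s [^]\<^bsub>R\<^esub> (p - 2) \<otimes>\<^bsub>R\<^esub> s [^]\<^bsub>R\<^esub> (2::nat) = s [^]\<^bsub>R\<^esub> p"
            using R.nat_pow_mult[OF sc, of "p - 2" 2] pp by metis
          moreover have "s [^]\<^bsub>R\<^esub> (2::nat) = s \<otimes>\<^bsub>R\<^esub> s"
            using sc by (simp add: numeral_2_eq_2)
          ultimately show ?thesis by simp
        qed
        have "F (s \<odot>\<^bsub>M\<^esub> (F ^^ n) g) = (s [^]\<^bsub>R\<^esub> p) \<odot>\<^bsub>M\<^esub> (F ^^ Suc n) g"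
          using Fsm[OF sc powc[OF gc]] by simp
        also have "\<dots> = s [^]\<^bsub>R\<^esub> (p - 2) \<odot>\<^bsub>M\<^esub> ((s \<otimes>\<^bsub>R\<^esub> s) \<odot>\<^bsub>M\<^esub> (F ^^ Suc n) g)"
          unfolding pe using sc gc powc by (simp add: smult_assoc1 del: funpow.simps)
        also have "\<dots> = \<zero>\<^bsub>M\<^esub>" unfolding ss using sc by simp
        finally show ?thesis using tf sc gc powc by blast
      qed
      then show "g \<in> N" unfolding N_def ann_rel_def using gc by blast
    qed
  qed
  have grrel: "grann_rel R M F L N n = C" for n
  proof
    show "C \<subseteq> grann_rel R M F L N n"
      unfolding grann_rel_def using key1 Cc by blast
  next
    show "grann_rel R M F L N n \<subseteq> C"
    proof
      fix r assume r: "r \<in> grann_rel R M F L N n"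
      have rc: "r \<in> carrier R" using r unfolding grann_rel_def by blast
      have "r \<in> P i" if i: "i \<in> V" for i
      proof -
        have "i \<in> {1..t} - U" using i Vsub assms(11) by blast
        then obtain s where s: "s \<in> A" "s \<notin> P i"
          using avoid[OF Usub assms(12)] unfolding A_def by blast
        have sc: "s \<in> carrier R" using s Ac by blast
        have "s \<otimes>\<^bsub>R\<^esub> r \<in> grann R M F N n"
          unfolding grann_rel_def
        proof (intro CollectI conjI ballI)
          show "s \<otimes>\<^bsub>R\<^esub> r \<in> carrier R" using sc rc by simp
        next
          fix g assume g: "g \<in> N"
          have gc: "g \<in> carrier M" using g Nc by blast
          have "r \<odot>\<^bsub>M\<^esub> (F ^^ n) g \<in> L" using r g unfolding grann_rel_def by blast
          then have "s \<odot>\<^bsub>M\<^esub> (F ^^ 0) (r \<odot>\<^bsub>M\<^esub> (F ^^ n) g) \<in> {\<zero>\<^bsub>M\<^esub>}"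
            using s(1) unfolding L_def ann_rel_def by blast
          then show "(s \<otimes>\<^bsub>R\<^esub> r) \<odot>\<^bsub>M\<^esub> (F ^^ n) g \<in> {\<zero>\<^bsub>M\<^esub>}"
            using sc rc gc powc by (simp add: smult_assoc1)
        qed
        then have "s \<otimes>\<^bsub>R\<^esub> r \<in> P i" using grN bdef i Vsub by blast
        then show ?thesis
          using primeideal.I_prime[OF Pp, of i s r] i Vsub sc rc s(2) by auto
      qed
      then show "r \<in> C" unfolding C_def by blast
    qed
  qed
  show ?thesis
    unfolding A_def[symmetric] C_def[symmetric] N_def[symmetric] L_def[symmetric]
    using zL Lnz LN LneN annrel grrel grL unfolding ext_ideal_def by auto
qed

end
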